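(* Let $X=\mathbb{CP}^2\#n\overline{\mathbb{CP}}^2$ and $k\ge1$. The set of minimal elements of $U_5=\{A\in H_2(X;\mathbb{Z}):\mathrm{ind}(A)\ge2k,\ A\cdot H>0\}$ with respect to the preorder $\ge$ is finite.
   Context: $K_0=-3H+E_1+\cdots+E_n$, $\mathrm{ind}(A):=A^2-K_0\cdot A$. With $H^2(X;\mathbb{R})\cong\mathbb{R}^{n+1}$ via $(x_0,\dots,x_n)\leftrightarrow x_0PD(H)-\sum x_iPD(E_i)$, the reduced cone $\mathcal{P}$ is: $0<x_1<x_0$ ($n=1$); $0<x_2\le x_1$, $x_1+x_2<x_0$ ($n=2$); $0<x_n\le\cdots\le x_1$, $x_1+x_2+x_3\le x_0$, $\sum x_i^2<x_0^2$ ($n\ge3$); $\mathcal{P}^{c_1>0}=\{[\omega]\in\mathcal{P}:\omega(3H-\sum E_i)>0\}$. For $A,B\in U_5$, $A\ge B$ means $\omega(A)\ge\omega(B)$ for all $[\omega]\in\mathcal{P}^{c_1>0}$; $A$ is minimal if no other $B\in U_5$ satisfies $A\ge B$. *)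

theory Defs
  imports Complex_Main
begin

text \<open>H_2(X;Z) = Z^(n+1) with basis H, E_1,...,E_n.
  A homology class A is represented by a function A :: nat => int with
  A = (A 0) H + sum_{i=1..n} (A i) E_i, and A i = 0 for i > n.\<close>

definition H2 :: "nat \<Rightarrow> (nat \<Rightarrow> int) set" where
  "H2 n = {A. \<forall>i>n. A i = 0}"

definition inter :: "nat \<Rightarrow> (nat \<Rightarrow> int) \<Rightarrow> (nat \<Rightarrow> int) \<Rightarrow> int" where
  "inter n A B = A 0 * B 0 - (\<Sum>i=1..n. A i * B i)"

definition Hcl :: "nat \<Rightarrow> int" where
  "Hcl = (\<lambda>j. if j = 0 then 1 else 0)"

definition Ecl :: "nat \<Rightarrow> nat \<Rightarrow> int" where
  "Ecl i = (\<lambda>j. if j = i then 1 else 0)"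

definition K0 :: "nat \<Rightarrow> nat \<Rightarrow> int" where
  "K0 n = (\<lambda>j. if j = 0 then -3 else if j \<le> n then 1 else 0)"

definition ind :: "nat \<Rightarrow> (nat \<Rightarrow> int) \<Rightarrow> int" where
  "ind n A = inter n A A - inter n (K0 n) A"

text \<open>Pairing of the cohomology class x_0 PD(H) - sum x_i PD(E_i) with A.\<close>
definition omega :: "nat \<Rightarrow> (nat \<Rightarrow> real) \<Rightarrow> (nat \<Rightarrow> int) \<Rightarrow> real" where
  "omega n x A = x 0 * of_int (inter n Hcl A) - (\<Sum>i=1..n. x i * of_int (inter n (Ecl i) A))"

definition reduced_cone :: "nat \<Rightarrow> (nat \<Rightarrow> real) set" where
  "reduced_cone n =
    (if n = 1 then {x. 0 < x 1 \<and> x 1 < x 0}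
     else if n = 2 then {x. 0 < x 2 \<and> x 2 \<le> x 1 \<and> x 1 + x 2 < x 0}
     else {x. 0 < x n \<and> (\<forall>i\<in>{1..<n}. x (i+1) \<le> x i) \<and> x 1 + x 2 + x 3 \<le> x 0
              \<and> (\<Sum>i=1..n. (x i)\<^sup>2) < (x 0)\<^sup>2})"

definition c1cl :: "nat \<Rightarrow> nat \<Rightarrow> int" where
  "c1cl n = (\<lambda>j. if j = 0 then 3 else if j \<le> n then -1 else 0)"

definition reduced_cone_c1pos :: "nat \<Rightarrow> (nat \<Rightarrow> real) set" where
  "reduced_cone_c1pos n = {x \<in> reduced_cone n. omega n x (c1cl n) > 0}"

definition U5 :: "nat \<Rightarrow> nat \<Rightarrow> (nat \<Rightarrow> int) set" where
  "U5 n k = {A \<in> H2 n. ind n A \<ge> 2 * int k \<and> inter n A Hcl > 0}"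

definition cls_ge :: "nat \<Rightarrow> (nat \<Rightarrow> int) \<Rightarrow> (nat \<Rightarrow> int) \<Rightarrow> bool" where
  "cls_ge n A B \<longleftrightarrow> (\<forall>x\<in>reduced_cone_c1pos n. omega n x A \<ge> omega n x B)"

definition minimal_U5 :: "nat \<Rightarrow> nat \<Rightarrow> (nat \<Rightarrow> int) set" where
  "minimal_U5 n k = {A \<in> U5 n k. \<not> (\<exists>B\<in>U5 n k. B \<noteq> A \<and> cls_ge n A B)}"

end

theory Submission
  imports Defs
begin

lemma omega_eq: "omega n x A = x 0 * of_int (A 0) + (\<Sum>i=1..n. x i * of_int (A i))"
proof -
  have h: "inter n Hcl A = A 0" by (simp add: inter_def Hcl_def)
  have e: "\<And>i. i \<in> {1..n} \<Longrightarrow> inter n (Ecl i) A = - A i"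
  proof -
    fix i assume i: "i \<in> {1..n}"
    have "(\<Sum>j=1..n. Ecl i j * A j) = (\<Sum>j=1..n. if j = i then A j else 0)"
      by (rule sum.cong) (auto simp: Ecl_def)
    also have "\<dots> = A i" using i by (simp add: sum.delta)
    finally show "inter n (Ecl i) A = - A i" using i by (simp add: inter_def Ecl_def)
  qed
  have "(\<Sum>i=1..n. x i * of_int (inter n (Ecl i) A)) = (\<Sum>i=1..n. - (x i * of_int (A i)))"
    by (rule sum.cong) (auto simp: e)
  then show ?thesis by (simp add: omega_def h sum_negf)
qed

lemma ind_eq: "ind n A = (A 0)^2 + 3 * A 0 - (\<Sum>i=1..n. (A i)^2 - A i)"
proof -
  have k: "(\<Sum>i=1..n. K0 n i * A i) = (\<Sum>i=1..n. A i)"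
    by (rule sum.cong) (auto simp: K0_def)
  show ?thesis by (simp add: ind_def inter_def k K0_def power2_eq_square sum_subtractf)
qed

lemma inter_Hcl: "inter n B Hcl = B 0"
  by (simp add: inter_def Hcl_def)

lemma cone_mono:
  assumes x: "x \<in> reduced_cone n" and "1 \<le> i" "i \<le> j" "j \<le> n"
  shows "x j \<le> x i"
proof (cases "n \<ge> 3")
  case True
  then have st: "\<forall>i\<in>{1..<n}. x (i+1) \<le> x i" using x by (simp add: reduced_cone_def)
  have alld: "\<forall>d. i + d \<le> n \<longrightarrow> x (i+d) \<le> x i"
  proof
    fix d show "i + d \<le> n \<longrightarrow> x (i+d) \<le> x i"
    proof (induction d)
      case 0 then show ?case by simp
    next
      case (Suc d)
      show ?case
      proof
        assume "i + Suc d \<le> n"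
        then have "x (i+d+1) \<le> x (i+d)" using st \<open>1 \<le> i\<close> by auto
        with Suc \<open>i + Suc d \<le> n\<close> show "x (i + Suc d) \<le> x i" by simp
      qed
    qed
  qed
  have "i + (j - i) \<le> n" using assms by simp
  then have "x (i + (j - i)) \<le> x i" using alld by blast
  then show ?thesis using assms by simp
next
  case False
  then have "n = 1 \<or> n = 2" using assms by auto
  then show ?thesis
  proof
    assume "n = 1" then have "i = j" using assms by simp
    then show ?thesis by simp
  next
    assume n2: "n = 2"
    show ?thesis
    proof (cases "i = j")
      case True then show ?thesis by simp
    next
      case False
      then have "i = 1" "j = 2" using assms n2 by auto
      then show ?thesis using x n2 by (simp add: reduced_cone_def)
    qed
  qed
qed

lemma cone_pos:
  assumes x: "x \<in> reduced_cone n" and "1 \<le> j" "j \<le> n"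
  shows "0 < x j"
proof -
  have "0 < x n" using x assms by (auto simp: reduced_cone_def split: if_splits)
  moreover have "x n \<le> x j" using cone_mono[OF x] assms by simp
  ultimately show ?thesis by simp
qed

lemma cone_x0:
  assumes x: "x \<in> reduced_cone n" and "1 \<le> n"
  shows "(\<Sum>i=1..n. if i \<le> 3 then x i else 0) \<le> x 0"
proof -
  consider "n = 1" | "n = 2" | "n \<ge> 3" using assms by linarith
  then show ?thesis
  proof cases
    case 1 then show ?thesis using x by (simp add: reduced_cone_def)
  next
    case 2 then show ?thesis using x by (simp add: reduced_cone_def numeral_2_eq_2)
  next
    case 3
    have "(\<Sum>i=1..n. if i \<le> 3 then x i else 0) = (\<Sum>i\<in>{i\<in>{1..n}. i \<le> 3}. x i)"
      by (subst sum.inter_filter) auto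
    also have "{i\<in>{1..n}. i \<le> 3} = {1,2,3}" using 3 by auto
    finally show ?thesis using x 3 by (simp add: reduced_cone_def)
  qed
qed

lemma ind_sub: "ind n (\<lambda>t. A t - v t) = ind n A - 2 * A 0 * v 0 + (v 0)^2 - 3 * v 0
   - (\<Sum>i=1..n. (v i)^2 + v i) + 2 * (\<Sum>i=1..n. A i * v i)"
proof -
  have p: "\<And>i. (A i - v i)^2 - (A i - v i) = ((A i)^2 - A i) + (((v i)^2 + v i) - 2*(A i * v i))"
    by (simp add: power2_eq_square algebra_simps)
  have "(\<Sum>i=1..n. (A i - v i)^2 - (A i - v i)) = (\<Sum>i=1..n. (A i)^2 - A i) + ((\<Sum>i=1..n. (v i)^2 + v i) - 2 * (\<Sum>i=1..n. A i * v i))"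
    by (simp only: p sum.distrib sum_subtractf sum_distrib_left)
  then show ?thesis by (simp add: ind_eq power2_eq_square algebra_simps)
qed

lemma omega_sub: "omega n x (\<lambda>t. A t - v t) = omega n x A - omega n x v"
  by (simp add: omega_eq algebra_simps sum_subtractf)

lemma move:
  assumes A: "A \<in> minimal_U5 n k" and v: "v \<in> H2 n" and vj: "v j \<noteq> 0" and v0: "v 0 < A 0"
    and om: "\<forall>x\<in>reduced_cone_c1pos n. 0 \<le> omega n x v"
  shows "ind n (\<lambda>t. A t - v t) < 2 * int k"
proof (rule ccontr)
  assume c: "\<not> ind n (\<lambda>t. A t - v t) < 2 * int k"
  let ?B = "\<lambda>t. A t - v t"
  have AU: "A \<in> U5 n k" and nm: "\<not> (\<exists>B\<in>U5 n k. B \<noteq> A \<and> cls_ge n A B)"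
    using A by (auto simp: minimal_U5_def)
  have "?B \<in> H2 n" using AU v by (auto simp: U5_def H2_def)
  moreover have "inter n ?B Hcl > 0" using v0 by (simp add: inter_Hcl)
  ultimately have BU: "?B \<in> U5 n k" using c by (simp add: U5_def)
  have "?B \<noteq> A" using vj by (auto dest: fun_cong[where x=j])
  moreover have "cls_ge n A ?B" using om by (simp add: cls_ge_def omega_sub)
  ultimately show False using nm BU by blast
qed

lemma U5_pos: "A \<in> minimal_U5 n k \<Longrightarrow> A 0 > 0 \<and> A \<in> H2 n \<and> ind n A \<ge> 2 * int k"
  by (auto simp: minimal_U5_def U5_def inter_Hcl)

lemma c1pos_cone: "x \<in> reduced_cone_c1pos n \<Longrightarrow> x \<in> reduced_cone n"
  by (simp add: reduced_cone_c1pos_def)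

lemma moveE:
  assumes A: "A \<in> minimal_U5 n k" and j: "1 \<le> j" "j \<le> n"
  shows "ind n A + 2 * A j - 2 < 2 * int k"
proof -
  have AP: "A 0 > 0" using U5_pos[OF A] by simp
  have s1: "(\<Sum>i=1..n. (Ecl j i)^2 + Ecl j i) = (\<Sum>i=1..n. if i = j then 2 else 0)"
    by (rule sum.cong) (auto simp: Ecl_def)
  have s2: "(\<Sum>i=1..n. A i * Ecl j i) = (\<Sum>i=1..n. if i = j then A i else 0)"
    by (rule sum.cong) (auto simp: Ecl_def)
  have "ind n (\<lambda>t. A t - Ecl j t) < 2 * int k"
  proof (rule move[OF A, where j=j])
    show "Ecl j \<in> H2 n" using j by (simp add: H2_def Ecl_def)
    show "Ecl j j \<noteq> 0" by (simp add: Ecl_def)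
    show "Ecl j 0 < A 0" using AP j by (simp add: Ecl_def)
    show "\<forall>x\<in>reduced_cone_c1pos n. 0 \<le> omega n x (Ecl j)"
    proof
      fix x assume "x \<in> reduced_cone_c1pos n"
      then have "0 < x j" using cone_pos[OF c1pos_cone] j by blast
      moreover have "omega n x (Ecl j) = x j"
      proof -
        have "(\<Sum>i=1..n. x i * of_int (Ecl j i)) = (\<Sum>i=1..n. if i = j then x i else 0)"
          by (rule sum.cong) (auto simp: Ecl_def)
        then show ?thesis using j by (simp add: omega_eq Ecl_def sum.delta)
      qed
      ultimately show "0 \<le> omega n x (Ecl j)" by simp
    qed
  qed
  moreover have "ind n (\<lambda>t. A t - Ecl j t) = ind n A + 2 * A j - 2"
    unfolding ind_sub s1 s2 using j by (simp add: sum.delta Ecl_def)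
  ultimately show ?thesis by simp
qed

lemma moveEE:
  assumes A: "A \<in> minimal_U5 n k" and j: "1 \<le> i" "i < j" "j \<le> n"
  shows "ind n A + 2 * A i - 2 * A j - 2 < 2 * int k"
proof -
  let ?v = "\<lambda>t. Ecl i t - Ecl j t"
  have AP: "A 0 > 0" using U5_pos[OF A] by simp
  have s1: "(\<Sum>t=1..n. (?v t)^2 + ?v t) = (\<Sum>t=1..n. if t = i then 2 else 0)"
    by (rule sum.cong) (use j in \<open>auto simp: Ecl_def\<close>)
  have s2: "(\<Sum>t=1..n. A t * ?v t) = (\<Sum>t=1..n. (if t = i then A t else 0) - (if t = j then A t else 0))"
    by (rule sum.cong) (auto simp: Ecl_def)
  have "ind n (\<lambda>t. A t - ?v t) < 2 * int k"
  proof (rule move[OF A, where j=j])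
    show "?v \<in> H2 n" using j by (simp add: H2_def Ecl_def)
    show "?v j \<noteq> 0" using j by (simp add: Ecl_def)
    show "?v 0 < A 0" using AP j by (simp add: Ecl_def)
    show "\<forall>x\<in>reduced_cone_c1pos n. 0 \<le> omega n x ?v"
    proof
      fix x assume "x \<in> reduced_cone_c1pos n"
      then have "x j \<le> x i" using cone_mono[OF c1pos_cone] j by simp
      moreover have "omega n x ?v = x i - x j"
      proof -
        have "(\<Sum>t=1..n. x t * of_int (?v t)) = (\<Sum>t=1..n. (if t = i then x t else 0) - (if t = j then x t else 0))"
          by (rule sum.cong) (auto simp: Ecl_def)
        also have "\<dots> = x i - x j" using j by (simp add: sum_subtractf sum.delta)
        finally show ?thesis using j by (simp add: omega_eq Ecl_def)
      qed
      ultimately show "0 \<le> omega n x ?v" by simp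
    qed
  qed
  moreover have "ind n (\<lambda>t. A t - ?v t) = ind n A + 2 * A i - 2 * A j - 2"
    unfolding ind_sub s1 s2 using j by (simp add: sum_subtractf sum.delta Ecl_def)
  ultimately show ?thesis by simp
qed

lemma sum3:
  assumes A: "A \<in> H2 n" and n: "1 \<le> n"
  shows "(\<Sum>t=1..n. if t \<le> 3 then A t else 0) = A 1 + A 2 + A 3"
proof -
  have z: "\<And>t. t > n \<Longrightarrow> A t = 0" using A by (simp add: H2_def)
  consider "n = 1" | "n = 2" | "n \<ge> 3" using n by linarith
  then show ?thesis
  proof cases
    case 1 then show ?thesis using z[of 2] z[of 3] by simp
  next
    case 2 then show ?thesis using z[of 3] by (simp add: numeral_2_eq_2)
  next
    case 3
    have "(\<Sum>t=1..n. if t \<le> 3 then A t else 0) = (\<Sum>t\<in>{t\<in>{1..n}. t \<le> 3}. A t)"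
      by (subst sum.inter_filter) auto
    also have "{t\<in>{1..n}. t \<le> (3::nat)} = {1,2,3}" using 3 by auto
    finally show ?thesis by simp
  qed
qed

lemma moveH3:
  assumes A: "A \<in> minimal_U5 n k" and n: "1 \<le> n" and a0: "A 0 > 1"
  shows "ind n A - 2 * (A 0 + A 1 + A 2 + A 3) - 2 < 2 * int k"
proof -
  define v :: "nat \<Rightarrow> int" where "v = (\<lambda>t. if t = 0 then 1 else if t \<le> 3 \<and> t \<le> n then -1 else 0)"
  have AH: "A \<in> H2 n" using U5_pos[OF A] by simp
  have s1: "(\<Sum>t=1..n. (v t)^2 + v t) = (\<Sum>t=1..n. 0)"
    by (rule sum.cong) (auto simp: v_def)
  have s2: "(\<Sum>t=1..n. A t * v t) = (\<Sum>t=1..n. - (if t \<le> 3 then A t else 0))"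
    by (rule sum.cong) (auto simp: v_def)
  have "ind n (\<lambda>t. A t - v t) < 2 * int k"
  proof (rule move[OF A, where j=0])
    show "v \<in> H2 n" using n by (simp add: H2_def v_def)
    show "v 0 \<noteq> 0" by (simp add: v_def)
    show "v 0 < A 0" using a0 by (simp add: v_def)
    show "\<forall>x\<in>reduced_cone_c1pos n. 0 \<le> omega n x v"
    proof
      fix x assume "x \<in> reduced_cone_c1pos n"
      then have c: "(\<Sum>i=1..n. if i \<le> 3 then x i else 0) \<le> x 0" using cone_x0[OF c1pos_cone] n by blast
      have "(\<Sum>t=1..n. x t * of_int (v t)) = (\<Sum>t=1..n. - (if t \<le> 3 then x t else 0))"
        by (rule sum.cong) (auto simp: v_def)
      then have "omega n x v = x 0 - (\<Sum>i=1..n. if i \<le> 3 then x i else 0)"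
        by (simp add: omega_eq v_def sum_negf)
      then show "0 \<le> omega n x v" using c by simp
    qed
  qed
  moreover have "ind n (\<lambda>t. A t - v t) = ind n A - 2 * (A 0 + A 1 + A 2 + A 3) - 2"
    unfolding ind_sub s1 s2 using sum3[OF AH n] by (simp add: sum_negf v_def)
  ultimately show ?thesis by simp
qed

lemma movec1:
  assumes A: "A \<in> minimal_U5 n k" and a0: "A 0 > 3"
  shows "ind n A - 6 * A 0 - 2 * (\<Sum>t=1..n. A t) < 2 * int k"
proof -
  let ?v = "c1cl n"
  have s1: "(\<Sum>t=1..n. (?v t)^2 + ?v t) = (\<Sum>t=1..n. 0)"
    by (rule sum.cong) (auto simp: c1cl_def)
  have s2: "(\<Sum>t=1..n. A t * ?v t) = (\<Sum>t=1..n. - A t)"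
    by (rule sum.cong) (auto simp: c1cl_def)
  have "ind n (\<lambda>t. A t - ?v t) < 2 * int k"
  proof (rule move[OF A, where j=0])
    show "?v \<in> H2 n" by (simp add: H2_def c1cl_def)
    show "?v 0 \<noteq> 0" by (simp add: c1cl_def)
    show "?v 0 < A 0" using a0 by (simp add: c1cl_def)
    show "\<forall>x\<in>reduced_cone_c1pos n. 0 \<le> omega n x ?v"
      by (auto simp: reduced_cone_c1pos_def)
  qed
  moreover have "ind n (\<lambda>t. A t - ?v t) = ind n A - 6 * A 0 - 2 * (\<Sum>t=1..n. A t)"
    unfolding ind_sub s1 s2 by (simp add: sum_negf c1cl_def)
  ultimately show ?thesis by simp
qed

lemma arithA:
  fixes a0 bu bv bw S Q k :: int
  assumes h: "bv \<le> bu" "bw \<le> bv" "2 \<le> bw" "0 \<le> a0 - bu - bv - bw" "1 \<le> 3*a0 - S"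
    "a0^2 - Q < 3*a0 - S + 2*k" "Q \<le> bu^2 + bv^2 + bw*(S - bu - bv)"
  shows "a0 \<le> 8*k^2 + 6*k"
proof -
  define e where "e = a0 - bu - bv - bw"
  define c where "c = 3*a0 - S"
  have a0: "a0 = bu+bv+bw+e" and S: "S = 3*a0 - c" by (simp_all add: e_def c_def)
  have "a0^2 - bu^2 - bv^2 - bw*(S - bu - bv) < c + 2*k" using h(6,7) by (simp add: c_def)
  moreover have "a0^2 - bu^2 - bv^2 - bw*(S - bu - bv) = 2*(bu*bv - bw^2) + e*(2*bu+2*bv-bw) + e^2 + c*bw"
    unfolding S a0 by (simp add: algebra_simps power2_eq_square)
  ultimately have key: "2*(bu*bv - bw^2) + e*(2*bu+2*bv-bw) + e^2 + c*(bw-1) < 2*k"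
    by (simp add: algebra_simps)
  have t1: "bw*bw \<le> bu*bv" using h by (intro mult_mono) auto
  have t2: "0 \<le> e*(2*bu+2*bv-bw)" using h e_def by simp
  have t3: "bw - 1 \<le> c*(bw-1)" using h c_def
  proof -
    have "0 \<le> (c-1)*(bw-1)" using h c_def by simp
    then show ?thesis by (simp add: algebra_simps)
  qed
  have e0: "0 \<le> e" using h e_def by simp
  have t4: "e \<le> e^2" using e0 by (cases "e = 0") (auto simp: power2_eq_square)
  have b3k: "bw \<le> 2*k" using key t1 t2 t3 t4 e0 h unfolding power2_eq_square by (smt (verit))
  have ek: "e \<le> 2*k" using key t1 t2 t3 t4 e0 h unfolding power2_eq_square by (smt (verit))
  have bb: "bu*bv < k + bw^2" using key t1 t2 t3 t4 e0 h unfolding power2_eq_square by (smt (verit))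
  have "bw^2 \<le> (2*k)^2" using b3k h by (intro power_mono) auto
  then have b32: "bw^2 \<le> 4*k^2" by (simp add: power_mult_distrib)
  have "bu \<le> bu*bv" using h by simp
  then show ?thesis using a0 bb b32 ek b3k h by linarith
qed

lemma arithB:
  fixes a0 bu bv bw T n k :: int
  assumes h: "0 \<le> bu" "0 \<le> bv" "0 \<le> bw" "bw \<le> 1" "0 \<le> a0 - bu - bv - bw"
    "T \<le> bu^2 + bu + bv^2 + bv + 2*n"
    "a0^2 + 3*a0 - T - 2*k < 2*(a0 - bu - bv - bw) + 2" "0 \<le> n" "0 \<le> k"
  shows "a0 \<le> 3*n + 3*k + 2"
proof -
  define e where "e = a0 - bu - bv - bw"
  have a0: "a0 = bu+bv+bw+e" by (simp add: e_def)
  have e0: "0 \<le> e" using h e_def by simp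
  have f1: "a0^2 + 3*a0 - bu^2 - bu - bv^2 - bv - 2*n - 2*k < 2*e + 2" using h e_def by (smt (verit))
  have f2: "a0^2 = (bu+bv+e)^2 + bw*(2*(bu+bv+e) + bw)" unfolding a0 by (simp add: algebra_simps power2_eq_square)
  have f3: "0 \<le> bw*(2*(bu+bv+e) + bw)" using h e0 by simp
  have f4: "(bu+bv+e)^2 = bu^2 + bv^2 + e^2 + 2*(bu*bv) + 2*(e*(bu+bv))" by (simp add: algebra_simps power2_eq_square)
  have f5: "0 \<le> bu*bv" "0 \<le> e*(bu+bv)" using h e0 by simp_all
  have "2*(bu+bv) + e^2 + e < 2*n + 2*k + 2" using f1 f2 f3 f4 f5 a0 h by (smt (verit))
  moreover have "e \<le> e^2" using e0 by (cases "e = 0") (auto simp: power2_eq_square)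
  ultimately show ?thesis using a0 h e0 by (smt (verit))
qed

lemma sum12:
  fixes f :: "nat \<Rightarrow> int"
  assumes n: "1 \<le> n" and f2: "n = 1 \<Longrightarrow> f 2 = 0"
  shows "(\<Sum>i=1..n. f i) = f 1 + f 2 + (\<Sum>i=1..n. if 3 \<le> i then f i else 0)"
proof (cases "n = 1")
  case True
  then show ?thesis using f2 by simp
next
  case False
  then have n2: "2 \<le> n" using n by simp
  have sp: "(\<Sum>i=1..n. g i) = g 1 + g 2 + (\<Sum>i=3..n. g i)" for g :: "nat \<Rightarrow> int"
  proof -
    have "(\<Sum>i=1..n. g i) = g 1 + (\<Sum>i=Suc 1..n. g i)" using n by (rule sum.atLeast_Suc_atMost)
    also have "(\<Sum>i=Suc 1..n. g i) = g 2 + (\<Sum>i=Suc 2..n. g i)"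
      using n2 by (simp add: sum.atLeast_Suc_atMost numeral_2_eq_2 numeral_3_eq_3)
    finally show ?thesis by (simp add: numeral_2_eq_2 numeral_3_eq_3)
  qed
  have "(\<Sum>i=3..n. f i) = (\<Sum>i=3..n. if 3 \<le> i then f i else 0)"
    by (rule sum.cong) auto
  then show ?thesis using sp[of f] sp[of "\<lambda>i. if 3 \<le> i then f i else 0"] by simp
qed

lemma a0_bound:
  assumes A: "A \<in> minimal_U5 n k" and n: "1 \<le> n"
  shows "A 0 \<le> 8 * (int k)^2 + 9 * int k + 3 * int n + 4"
proof -
  have AP: "A 0 > 0" and AH: "A \<in> H2 n" and AI: "ind n A \<ge> 2 * int k" using U5_pos[OF A] by auto
  have neg: "A j \<le> 0" if "1 \<le> j" "j \<le> n" for j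
    using moveE[OF A that] AI by linarith
  have ext: "\<And>j. n < j \<Longrightarrow> A j = 0" using AH by (simp add: H2_def)
  have srt: "A i \<le> A j" if "1 \<le> i" "i < j" "j \<le> n" for i j
    using moveEE[OF A that] AI by linarith
  have ie: "ind n A = (A 0)^2 + 3 * A 0 - (\<Sum>i=1..n. (A i)^2 - A i)" by (rule ind_eq)
  have A2: "n = 1 \<Longrightarrow> A 2 = 0" using ext by simp
  show ?thesis
  proof (cases "A 0 \<le> 3")
    case True
    have "0 \<le> (int k)^2" by simp
    then show ?thesis using True by linarith
  next
    case False
    then have a4: "A 0 > 3" by simp
    have F3: "ind n A - 2 * (A 0 + A 1 + A 2 + A 3) - 2 < 2 * int k" using moveH3[OF A n] a4 by simp
    have F4: "ind n A - 6 * A 0 - 2 * (\<Sum>t=1..n. A t) < 2 * int k" using movec1[OF A a4] .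
    have a1n: "A 1 \<le> 0" using neg n by simp
    have a2n: "A 2 \<le> 0" using neg[of 2] ext[of 2] by (cases "2 \<le> n") auto
    have a3n: "A 3 \<le> 0" using neg[of 3] ext[of 3] by (cases "3 \<le> n") auto
    show ?thesis
    proof (cases "A 3 \<le> -2")
      case True
      then have n3: "3 \<le> n" using ext[of 3] by (cases "3 \<le> n") auto
      have s12: "A 1 \<le> A 2" "A 2 \<le> A 3" using srt n3 by auto
      define Q where "Q = (\<Sum>i=1..n. (A i)^2)"
      define S where "S = - (\<Sum>i=1..n. A i)"
      have indQ: "ind n A = (A 0)^2 + 3 * A 0 - Q - S" using ie by (simp add: Q_def S_def sum_subtractf)
      have "(\<Sum>i=1..n. (A i)^2 - A 3 * A i) = ((A 1)^2 - A 3 * A 1) + ((A 2)^2 - A 3 * A 2) + (\<Sum>i=1..n. if 3 \<le> i then (A i)^2 - A 3 * A i else 0)"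
        by (rule sum12[OF n]) (simp add: A2)
      moreover have "(\<Sum>i=1..n. if 3 \<le> i then (A i)^2 - A 3 * A i else 0) \<le> (\<Sum>i=1..n. 0)"
      proof (rule sum_mono)
        fix i assume i: "i \<in> {1..n}"
        show "(if 3 \<le> i then (A i)^2 - A 3 * A i else 0) \<le> 0"
        proof (cases "3 \<le> i")
          case True
          have "A 3 \<le> A i" using srt[of 3 i] i True by (cases "i = 3") auto
          moreover have "A i \<le> 0" using neg i by auto
          ultimately have "A i * (A i - A 3) \<le> 0" by (simp add: mult_nonpos_nonneg)
          then show ?thesis using True by (simp add: power2_eq_square algebra_simps)
        qed simp
      qed
      moreover have "(\<Sum>i=1..n. (A i)^2 - A 3 * A i) = Q - A 3 * (\<Sum>i=1..n. A i)"
        unfolding Q_def by (simp only: sum_subtractf sum_distrib_left)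
      moreover have "(\<Sum>i=1..n. (0::int)) = 0" by simp
      ultimately have Q1: "Q - A 3 * (\<Sum>i=1..n. A i) \<le> ((A 1)^2 - A 3 * A 1) + ((A 2)^2 - A 3 * A 2)"
        by linarith
      have Q2: "(- A 3) * (S - (- A 1) - (- A 2)) = A 3 * (\<Sum>i=1..n. A i) - A 3 * A 1 - A 3 * A 2"
        by (simp add: S_def algebra_simps)
      have Q3: "(- A 1)^2 = (A 1)^2" "(- A 2)^2 = (A 2)^2" by simp_all
      have Qb: "Q \<le> (- A 1)^2 + (- A 2)^2 + (- A 3) * (S - (- A 1) - (- A 2))"
        using Q1 Q2 Q3 by linarith
      have "A 0 \<le> 8 * (int k)^2 + 6 * int k"
      proof (rule arithA[where bu="- A 1" and bv="- A 2" and bw="- A 3" and S=S and Q=Q])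
        show "- A 2 \<le> - A 1" "- A 3 \<le> - A 2" "2 \<le> - A 3" using s12 True by linarith+
        show "0 \<le> A 0 - - A 1 - - A 2 - - A 3" using F3 AI by (smt (verit))
        have SS: "(\<Sum>t=1..n. A t) = - S" by (simp add: S_def)
        show "1 \<le> 3 * A 0 - S" using F4 AI unfolding SS by (smt (verit))
        show "(A 0)^2 - Q < 3 * A 0 - S + 2 * int k" using F4 indQ unfolding SS by (smt (verit))
        show "Q \<le> (- A 1)^2 + (- A 2)^2 + (- A 3) * (S - - A 1 - - A 2)" by (rule Qb)
      qed
      then show ?thesis by linarith
    next
      case False
      define T where "T = (\<Sum>i=1..n. (A i)^2 - A i)"
      have "T = ((A 1)^2 - A 1) + ((A 2)^2 - A 2) + (\<Sum>i=1..n. if 3 \<le> i then (A i)^2 - A i else 0)"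
        unfolding T_def by (rule sum12[OF n]) (simp add: A2)
      moreover have "(\<Sum>i=1..n. if 3 \<le> i then (A i)^2 - A i else 0) \<le> (\<Sum>i=1..n. 2)"
      proof (rule sum_mono)
        fix i assume i: "i \<in> {1..n}"
        show "(if 3 \<le> i then (A i)^2 - A i else 0) \<le> 2"
        proof (cases "3 \<le> i")
          case True
          have "A 3 \<le> A i" using srt[of 3 i] i True by (cases "i = 3") auto
          moreover have "A i \<le> 0" using neg i by auto
          ultimately have "A i = 0 \<or> A i = -1" using False by auto
          then show ?thesis using True by auto
        qed simp
      qed
      moreover have "(\<Sum>i=1..n. (2::int)) = 2 * int n" by simp
      ultimately have Tb0: "T \<le> ((A 1)^2 - A 1) + ((A 2)^2 - A 2) + 2 * int n"
        by linarith
      have Tb: "T \<le> (- A 1)^2 + (- A 1) + (- A 2)^2 + (- A 2) + 2 * int n"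
        using Tb0 by (simp add: power2_eq_square)
      have "A 0 \<le> 3 * int n + 3 * int k + 2"
      proof (rule arithB[where bu="- A 1" and bv="- A 2" and bw="- A 3" and T=T])
        show "0 \<le> - A 1" "0 \<le> - A 2" "0 \<le> - A 3" "- A 3 \<le> 1" using a1n a2n a3n False by auto
        show "0 \<le> A 0 - - A 1 - - A 2 - - A 3" using F3 AI by (smt (verit))
        show "T \<le> (- A 1)^2 + - A 1 + (- A 2)^2 + - A 2 + 2 * int n" using Tb by simp
        show "(A 0)^2 + 3 * A 0 - T - 2 * int k < 2 * (A 0 - - A 1 - - A 2 - - A 3) + 2"
          proof -
          have e1: "A 0 - - A 1 - - A 2 - - A 3 = A 0 + A 1 + A 2 + A 3" by simp
          show ?thesis unfolding e1 using F3 ie unfolding T_def[symmetric] by linarith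
        qed
        show "0 \<le> int n" "0 \<le> int k" by simp_all
      qed
      moreover have "0 \<le> (int k)^2" by simp
      ultimately show ?thesis by linarith
    qed
  qed
qed


lemma sq_minus_nonneg: "0 \<le> (x::int)^2 - x"
proof -
  have "0 \<le> x * (x - 1)" by (cases "x \<le> 0") (auto simp: mult_nonpos_nonpos)
  then show ?thesis by (simp add: power2_eq_square algebra_simps)
qed

lemma Ai_bound:
  assumes A: "A \<in> minimal_U5 n k" and i: "1 \<le> i" "i \<le> n"
  shows "- (A 0 + 2) < A i \<and> A i \<le> 0"
proof -
  have AP: "A 0 > 0" and AI: "ind n A \<ge> 2 * int k" using U5_pos[OF A] by auto
  have neg: "A i \<le> 0" using moveE[OF A i] AI by linarith
  have ie: "ind n A = (A 0)^2 + 3 * A 0 - (\<Sum>i=1..n. (A i)^2 - A i)" by (rule ind_eq)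
  have "(A i)^2 - A i \<le> (\<Sum>i=1..n. (A i)^2 - A i)"
    by (rule member_le_sum) (use i sq_minus_nonneg in auto)
  then have le: "(A i)^2 - A i \<le> (A 0)^2 + 3 * A 0" using ie AI by linarith
  have "- (A 0 + 2) < A i"
  proof (rule ccontr)
    assume "\<not> - (A 0 + 2) < A i"
    then have b: "A 0 + 2 \<le> - A i" by simp
    have "(A 0 + 2) * (A 0 + 2) \<le> (- A i) * (- A i)" using b AP by (intro mult_mono) auto
    then show False using le b AP by (simp add: power2_eq_square algebra_simps)
  qed
  then show ?thesis using neg by simp
qed

theorem proposition4p6:
  fixes n k :: nat
  assumes "n \<ge> 1" and "k \<ge> 1"
  shows "finite (minimal_U5 n k)"
proof -
  define M :: int where "M = 8 * (int k)^2 + 9 * int k + 3 * int n + 6"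
  have "minimal_U5 n k \<subseteq> {f. \<forall>x. (x \<in> {0..n} \<longrightarrow> f x \<in> {-M..M}) \<and> (x \<notin> {0..n} \<longrightarrow> f x = 0)}"
  proof
    fix A assume A: "A \<in> minimal_U5 n k"
    have AP: "A 0 > 0" and AH: "A \<in> H2 n" using U5_pos[OF A] by auto
    have a0: "A 0 \<le> 8 * (int k)^2 + 9 * int k + 3 * int n + 4" using a0_bound[OF A assms(1)] .
    have "A x \<in> {-M..M}" if x: "x \<in> {0..n}" for x
    proof (cases "x = 0")
      case True then show ?thesis using AP a0 by (simp add: M_def)
    next
      case False
      then have "- (A 0 + 2) < A x \<and> A x \<le> 0" using Ai_bound[OF A] x by simp
      moreover have "0 \<le> (int k)^2" by simp
      ultimately show ?thesis using AP a0 by (simp add: M_def)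
    qed
    moreover have "A x = 0" if "x \<notin> {0..n}" for x using AH that by (simp add: H2_def)
    ultimately show "A \<in> {f. \<forall>x. (x \<in> {0..n} \<longrightarrow> f x \<in> {-M..M}) \<and> (x \<notin> {0..n} \<longrightarrow> f x = 0)}"
      by blast
  qed
  moreover have "finite {f. \<forall>x. (x \<in> {0..n} \<longrightarrow> f x \<in> {-M..M}) \<and> (x \<notin> {0..n} \<longrightarrow> f x = (0::int))}"
    by (rule finite_set_of_finite_funs) auto
  ultimately show ?thesis by (rule finite_subset)
qed

end
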